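(* For all nonnegative integers $n,\ell,m$, the number of partitions of $n$ with exactly $\ell$ parts and $2$-measure equal to $m$ equals the number of partitions of $n$ with exactly $\ell$ parts whose Durfee square has side length $m$.
   Context: For a partition $\lambda$ and positive integer $k$, the $k$-measure of $\lambda$ is the length of the longest subsequence of the parts of $\lambda$ (listed in weakly decreasing order) in which the difference between any two consecutive members of the subsequence is at least $k$. The Durfee square of a partition is the largest square $s\times s$ contained in its Young (Ferrers) diagram; its length is $s$, i.e., the largest $s$ such that $\lambda$ has at least $s$ parts of size at least $s$. *)

theory Defs
  imports Main "HOL-Library.Sublist"
begin

definition partitions :: "nat \<Rightarrow> nat list set" where
  "partitions n = {xs. sorted_wrt (\<ge>) xs \<and> (\<forall>x\<in>set xs. 0 < x) \<and> sum_list xs = n}"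

definition k_measure :: "nat \<Rightarrow> nat list \<Rightarrow> nat" where
  "k_measure k xs = (GREATEST m. \<exists>ys. subseq ys xs \<and> successively (\<lambda>a b. a \<ge> b + k) ys \<and> length ys = m)"

definition durfee :: "nat list \<Rightarrow> nat" where
  "durfee xs = (GREATEST s. s \<le> length (filter (\<lambda>x. s \<le> x) xs))"

end

theory Submission
  imports Defs
begin

fun g :: "nat \<Rightarrow> nat list \<Rightarrow> nat list" where
  "g t [] = []"
| "g t (x # xs) = (if x + 2 \<le> t then x # g x xs else g t xs)"

fun greedy :: "nat list \<Rightarrow> nat list" where
  "greedy [] = []"
| "greedy (x # xs) = x # g x xs"

lemma g_props: "subseq (g t xs) xs \<and> successively (\<lambda>a b. a \<ge> b + 2) (g t xs) \<and>
   (\<forall>y\<in>set (g t xs). y + 2 \<le> t)"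
proof (induction xs arbitrary: t)
  case Nil then show ?case by simp
next
  case (Cons x xs)
  show ?case
  proof (cases "x + 2 \<le> t")
    case True
    have "subseq (g x xs) xs" "successively (\<lambda>a b. a \<ge> b + 2) (g x xs)"
      "\<forall>y\<in>set (g x xs). y + 2 \<le> x" using Cons.IH[of x] by auto
    then show ?thesis using True
      by (auto simp: successively_Cons intro: subseq_Cons2 dest: list.set_sel(1)[rotated])
  next
    case False
    then show ?thesis using Cons.IH[of t] by (auto intro: subseq_drop_many[of _ _ "[x]", simplified])
  qed
qed

lemma g_bound:
  assumes "sorted_wrt (\<ge>) xs" "subseq ys xs" "successively (\<lambda>a b. a \<ge> b + 2) ys"
    "\<forall>y\<in>set ys. y + 2 \<le> t"
  shows "length ys \<le> length (g t xs)"
  using assms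
proof (induction xs arbitrary: t ys)
  case Nil then show ?case by simp
next
  case (Cons x xs)
  show ?case
  proof (cases ys)
    case Nil then show ?thesis by simp
  next
    case (Cons y ys')
    have sxs: "sorted_wrt (\<ge>) xs" and xge: "\<forall>z\<in>set xs. z \<le> x" using Cons.prems(1) by auto
    have suc: "successively (\<lambda>a b. a \<ge> b + 2) ys'" using Cons.prems(3) Cons
      by (auto simp: successively_Cons)
    have ys'y: "\<forall>z\<in>set ys'. z + 2 \<le> y"
    proof -
      have "sorted_wrt (\<lambda>a b. a \<ge> b + 2) (y # ys')"
        using Cons.prems(3) Cons by (subst successively_conv_sorted_wrt[symmetric]) (auto simp: transp_def)
      then show ?thesis by auto
    qed
    show ?thesis
    proof (cases "x + 2 \<le> t")
      case True
      show ?thesis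
      proof (cases "y = x")
        case yx: True
        have "subseq ys' xs" using Cons.prems(2) Cons yx by simp
        then have "length ys' \<le> length (g x xs)"
          using Cons.IH[OF sxs _ suc] ys'y yx by auto
        then show ?thesis using True Cons by simp
      next
        case False
        have s2: "subseq ys xs" using Cons.prems(2) Cons False by simp
        then have "y \<in> set xs" using Cons by (metis list.set_intros(1) subseq_singleton_left
              subseq_order.dual_order.trans subseq_Cons2_iff subseq_Cons2 list_emb_Nil) 
        then have "y \<le> x" using xge by auto
        have "subseq ys' xs" using s2 \<open>ys = y # ys'\<close> subseq_Cons'[of y ys' xs] by simp
        moreover have "\<forall>z\<in>set ys'. z + 2 \<le> x" using ys'y \<open>y \<le> x\<close> by auto
        ultimately have "length ys' \<le> length (g x xs)"
          using Cons.IH[OF sxs _ suc] by blast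
        then show ?thesis using True Cons by simp
      qed
    next
      case False
      have "y \<noteq> x" using False Cons.prems(4) Cons by auto
      then have "subseq ys xs" using Cons.prems(2) Cons by simp
      then show ?thesis using Cons.IH[OF sxs _ Cons.prems(3) Cons.prems(4)] False by simp
    qed
  qed
qed

lemma kmeasure_greedy:
  assumes "sorted_wrt (\<ge>) xs"
  shows "k_measure 2 xs = length (greedy xs)"
proof -
  let ?P = "\<lambda>m. \<exists>ys. subseq ys xs \<and> successively (\<lambda>a b. a \<ge> b + 2) ys \<and> length ys = m"
  have P: "?P (length (greedy xs))"
  proof (cases xs)
    case Nil then show ?thesis by (intro exI[of _ "[]"]) simp
  next
    case (Cons x xs')
    have "subseq (g x xs') xs'" "successively (\<lambda>a b. a \<ge> b + 2) (g x xs')"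
      "\<forall>y\<in>set (g x xs'). y + 2 \<le> x" using g_props[of x xs'] by auto
    then show ?thesis using Cons
      by (intro exI[of _ "greedy xs"]) (auto simp: successively_Cons dest: list.set_sel(1)[rotated])
  qed
  have B: "length ys \<le> length (greedy xs)"
    if ys: "subseq ys xs" "successively (\<lambda>a b. a \<ge> b + 2) ys" for ys
  proof -
    show ?thesis
    proof (cases xs)
      case Nil then show ?thesis using ys by simp
    next
      case (Cons x xs')
      show ?thesis
      proof (cases ys)
        case Nil then show ?thesis using ys by simp
      next
        case (Cons y ys')
        have sxs: "sorted_wrt (\<ge>) xs'" and xge: "\<forall>z\<in>set xs'. z \<le> x"
          using assms \<open>xs = x # xs'\<close> by auto
        have suc: "successively (\<lambda>a b. a \<ge> b + 2) ys'" using ys(2) Cons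
          by (auto simp: successively_Cons)
        have ys'y: "\<forall>z\<in>set ys'. z + 2 \<le> y"
        proof -
          have "sorted_wrt (\<lambda>a b. a \<ge> b + 2) (y # ys')"
            using ys(2) Cons by (subst successively_conv_sorted_wrt[symmetric]) (auto simp: transp_def)
          then show ?thesis by auto
        qed
        have "y \<in> set ys" using \<open>ys = y # ys'\<close> by simp
        from list_emb_set[OF ys(1) this] have "y \<in> set xs" by blast
        then have "y \<le> x" using xge \<open>xs = x # xs'\<close> by auto
        have ss: "subseq (y # ys') (x # xs')" using ys(1) \<open>ys = y # ys'\<close> \<open>xs = x # xs'\<close> by simp
        have "subseq ys' xs'"
        proof (cases "y = x")
          case True then show ?thesis using ss by simp
        next
          case False then have "subseq (y # ys') xs'" using ss by simp
          then show ?thesis by (rule subseq_Cons')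
        qed
        moreover have "\<forall>z\<in>set ys'. z + 2 \<le> x" using ys'y \<open>y \<le> x\<close> by auto
        ultimately have "length ys' \<le> length (g x xs')"
          by (rule g_bound[OF sxs _ suc])
        then show ?thesis using \<open>ys = y # ys'\<close> \<open>xs = x # xs'\<close> by simp
      qed
    qed
  qed
  show ?thesis unfolding k_measure_def
  proof (rule Greatest_equality)
    show "?P (length (greedy xs))" by (rule P)
  next
    fix y assume "?P y"
    then obtain ys where "subseq ys xs" "successively (\<lambda>a b. a \<ge> b + 2) ys" "length ys = y"
      by blast
    then show "y \<le> length (greedy xs)" using B by auto
  qed
qed

lemma set_g: "set (g t xs) \<subseteq> set xs"
  by (induction xs arbitrary: t) auto

lemma g_append: "g t (xs @ ys) = g t xs @ g (last (t # g t xs)) ys"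
  by (induction xs arbitrary: t) auto

lemma g_map_Suc: "g (Suc t) (map Suc xs) = map Suc (g t xs)"
  by (induction xs arbitrary: t) auto

lemma g_rep1: "g t (replicate k 1) = (if 0 < k \<and> 3 \<le> t then [1] else [])"
proof (induction k arbitrary: t)
  case 0 then show ?case by simp
next
  case (Suc k)
  have "g 1 (replicate k 1) = []" using Suc.IH[of 1] by simp
  then show ?case using Suc.IH[of t] by auto
qed

definition col :: "nat \<Rightarrow> nat list \<Rightarrow> nat list" where
  "col k ys = map Suc ys @ replicate k 1"

definition sst :: "nat list \<Rightarrow> nat \<times> bool" where
  "sst xs = (length (greedy xs), xs \<noteq> [] \<and> last (greedy xs) = 1)"

definition tr :: "nat \<Rightarrow> nat \<times> bool \<Rightarrow> nat \<times> bool" where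
  "tr k s = (if 0 < k \<and> \<not> snd s then (Suc (fst s), True) else (fst s, False))"

lemma sst_col:
  assumes pos: "\<forall>y\<in>set ys. 0 < y"
  shows "sst (col k ys) = tr k (sst ys)"
proof (cases ys)
  case Nil
  show ?thesis
  proof (cases k)
    case 0 then show ?thesis using Nil by (simp add: col_def sst_def tr_def)
  next
    case (Suc k')
    have "g 1 (replicate k' 1) = []" using g_rep1[of 1 k'] by simp
    then show ?thesis using Nil Suc by (simp add: col_def sst_def tr_def)
  qed
next
  case (Cons y ys')
  define L where "L = g y ys'"
  define l0 where "l0 = last (y # L)"
  have "l0 \<in> set (y # L)" unfolding l0_def by simp
  then have "l0 \<in> set ys" using set_g[of y ys'] Cons L_def by auto
  then have l0pos: "0 < l0" using pos by auto
  have gr: "greedy ys = y # L" using Cons L_def by simp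
  have "greedy (col k ys) = Suc y # g (Suc y) (map Suc ys' @ replicate k 1)"
    using Cons by (simp add: col_def)
  also have "\<dots> = Suc y # (map Suc L @ g (Suc l0) (replicate k 1))"
    unfolding g_append g_map_Suc L_def l0_def
    by (simp add: last_map[symmetric] del: last.simps)
  finally have gc0: "greedy (col k ys) = Suc y # (map Suc L @ g (Suc l0) (replicate k 1))" .
  have gc: "greedy (col k ys) = Suc y # (map Suc L @ (if 0 < k \<and> 3 \<le> Suc l0 then [1] else []))"
    using gc0 g_rep1[of "Suc l0" k] by simp
  have lst: "last (Suc y # map Suc L) = Suc l0" unfolding l0_def
    by (metis last_map list.simps(9) list.distinct(1))
  have s1: "sst ys = (Suc (length L), l0 = 1)" using gr Cons unfolding sst_def l0_def by simp
  show ?thesis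
  proof (cases "0 < k \<and> 2 \<le> l0")
    case True
    then have "greedy (col k ys) = Suc y # (map Suc L @ [1])" using gc by simp
    then have "sst (col k ys) = (Suc (Suc (length L)), True)" unfolding sst_def using Cons by (simp add: col_def)
    then show ?thesis using s1 True unfolding tr_def by auto
  next
    case False
    then have "greedy (col k ys) = Suc y # map Suc L" using gc by auto
    then have "sst (col k ys) = (Suc (length L), False)" unfolding sst_def using lst l0pos Cons
      by (simp add: col_def)
    then show ?thesis using s1 False l0pos unfolding tr_def by auto
  qed
qed

definition dec_s :: "nat list \<Rightarrow> nat \<times> nat list" where
  "dec_s zs = (length (filter (\<lambda>x. x = 1) zs), map (\<lambda>x. x - 1) (filter (\<lambda>x. 1 < x) zs))"

lemma dec_col: "\<forall>y\<in>set ys. 0 < y \<Longrightarrow> dec_s (col k ys) = (k, ys)"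
proof -
  assume pos: "\<forall>y\<in>set ys. 0 < y"
  have "filter (\<lambda>x. x = 1) (map Suc ys) = []" using pos by (auto simp: filter_empty_conv)
  moreover have "filter (\<lambda>x. 1 < x) (map Suc ys) = map Suc ys" using pos by (auto simp: filter_id_conv)
  ultimately show ?thesis by (simp add: dec_s_def col_def map_idI)
qed

lemma sorted_split1:
  assumes "sorted_wrt (\<ge>) zs" "\<forall>z\<in>set zs. 0 < z"
  shows "zs = filter (\<lambda>x. 1 < x) zs @ filter (\<lambda>x. x = (1::nat)) zs"
  using assms
proof (induction zs)
  case Nil then show ?case by simp
next
  case (Cons z zs)
  show ?case
  proof (cases "1 < z")
    case True
    have e: "zs = filter (\<lambda>x. 1 < x) zs @ filter (\<lambda>x. x = 1) zs" using Cons by auto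
    have "filter (\<lambda>x. 1 < x) (z # zs) @ filter (\<lambda>x. x = 1) (z # zs)
       = z # (filter (\<lambda>x. 1 < x) zs @ filter (\<lambda>x. x = 1) zs)" using True by simp
    then show ?thesis using e by metis
  next
    case False
    then have "z = 1" using Cons.prems by auto
    then have a1: "\<forall>x\<in>set zs. x = 1" using Cons.prems by fastforce
    have "filter (\<lambda>x. 1 < x) zs = []" using a1 by (auto simp: filter_empty_conv)
    moreover have "filter (\<lambda>x. x = 1) zs = zs" using a1 by (auto simp: filter_id_conv)
    ultimately show ?thesis using \<open>z = 1\<close> by simp
  qed
qed

lemma filter_eq_rep: "filter (\<lambda>x. x = c) zs = replicate (length (filter (\<lambda>x. x = c) zs)) c"
  by (rule replicate_length_same[symmetric]) auto

lemma sorted_rep: "sorted_wrt (\<ge>) (replicate k (c::nat))"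
  by (induction k) auto

lemma sum_map_Suc: "sum_list (map Suc xs) = sum_list xs + length xs"
  by (induction xs) auto

lemma sorted_map_mono:
  assumes "sorted_wrt (\<ge>) (xs::nat list)" "\<And>a b. b \<le> a \<Longrightarrow> f b \<le> (f a::nat)"
  shows "sorted_wrt (\<ge>) (map f xs)"
  using assms by (induction xs) auto

lemma col_part: "ys \<in> partitions n \<Longrightarrow> col k ys \<in> partitions (n + length ys + k)"
  unfolding partitions_def col_def
  by (auto simp: sorted_wrt_append sorted_rep sum_map_Suc sum_list_replicate intro!: sorted_map_mono)

lemma col_len: "length (col k ys) = length ys + k"
  by (simp add: col_def)

lemma col_surj:
  assumes "zs \<in> partitions n"
  shows "\<exists>k ys n'. ys \<in> partitions n' \<and> col k ys = zs"
proof -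
  have s: "sorted_wrt (\<ge>) zs" and p: "\<forall>z\<in>set zs. 0 < z" using assms by (auto simp: partitions_def)
  define ys where "ys = map (\<lambda>x. x - 1) (filter (\<lambda>x. 1 < x) zs)"
  define k where "k = length (filter (\<lambda>x. x = 1) zs)"
  have "map Suc ys = filter (\<lambda>x. 1 < x) zs" unfolding ys_def by (auto intro: map_idI)
  then have "col k ys = zs" unfolding col_def k_def
    using sorted_split1[OF s p] filter_eq_rep[of 1 zs] by metis
  moreover have "ys \<in> partitions (sum_list ys)"
    unfolding partitions_def ys_def
    by (auto intro!: sorted_map_mono sorted_wrt_filter s)
  ultimately show ?thesis by blast
qed

lemma durfee_eq:
  assumes "\<forall>a\<in>set A. length A \<le> a" "\<forall>b\<in>set B. b \<le> length A"
  shows "durfee (A @ B) = length A"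
  unfolding durfee_def
proof (rule Greatest_equality)
  have "filter (\<lambda>x. length A \<le> x) A = A" using assms(1) by (simp add: filter_id_conv)
  then show "length A \<le> length (filter (\<lambda>x. length A \<le> x) (A @ B))" by simp
next
  fix s assume s: "s \<le> length (filter (\<lambda>x. s \<le> x) (A @ B))"
  show "s \<le> length A"
  proof (rule ccontr)
    assume "\<not> s \<le> length A"
    then have "filter (\<lambda>x. s \<le> x) B = []" using assms(2) by (auto simp: filter_empty_conv)
    then have "length (filter (\<lambda>x. s \<le> x) (A @ B)) \<le> length A" by (simp add: length_filter_le)
    then show False using s \<open>\<not> s \<le> length A\<close> by simp
  qed
qed

lemma durfee_nil: "durfee [] = 0"
  unfolding durfee_def by (rule Greatest_equality) simp_all

lemma sorted_drop_le:
  assumes "sorted_wrt (\<ge>) (xs::nat list)" "i < length xs" "y \<in> set (drop i xs)"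
  shows "y \<le> xs ! i"
proof -
  have "drop i xs = xs ! i # drop (Suc i) xs" using assms(2) by (simp add: Cons_nth_drop_Suc)
  moreover have "sorted_wrt (\<ge>) (drop i xs)" using assms(1) by (rule sorted_wrt_drop)
  ultimately show ?thesis using assms(3) by auto
qed

lemma sorted_take_ge:
  assumes "sorted_wrt (\<ge>) (xs::nat list)" "i < length xs" "a \<in> set (take (Suc i) xs)"
  shows "xs ! i \<le> a"
proof -
  have "take (Suc i) xs = take i xs @ [xs ! i]" using assms(2) by (simp add: take_Suc_conv_app_nth)
  moreover have "sorted_wrt (\<ge>) (take (Suc i) xs)" using assms(1) by (rule sorted_wrt_take)
  ultimately show ?thesis using assms(3) by (auto simp: sorted_wrt_append)
qed

lemma durfee_props:
  assumes s: "sorted_wrt (\<ge>) (xs::nat list)"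
  shows "durfee xs \<le> length xs" "\<forall>a\<in>set (take (durfee xs) xs). durfee xs \<le> a"
    "\<forall>b\<in>set (drop (durfee xs) xs). b \<le> durfee xs"
proof -
  define P where "P s = (s \<le> length (filter (\<lambda>x. s \<le> x) xs))" for s
  have bnd: "s \<le> length xs" if "P s" for s
    using that length_filter_le[of "\<lambda>x. s \<le> x" xs] unfolding P_def by linarith
  have P0: "P 0" unfolding P_def by simp
  have dm: "durfee xs = (GREATEST s. P s)" unfolding durfee_def P_def by simp
  have Pm: "P (durfee xs)" unfolding dm by (rule GreatestI_nat[where P = P, OF P0]) (use bnd in blast)
  have gm: "s \<le> durfee xs" if "P s" for s unfolding dm
    by (rule Greatest_le_nat[where P = P, OF that]) (use bnd in blast)
  let ?m = "durfee xs"
  show "?m \<le> length xs" using bnd Pm by blast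
  show "\<forall>a\<in>set (take ?m xs). ?m \<le> a"
  proof
    fix a assume a: "a \<in> set (take ?m xs)"
    then obtain i where i: "i < length (take ?m xs)" "a = take ?m xs ! i" by (auto simp: in_set_conv_nth)
    then have i2: "i < ?m" "i < length xs" and ai: "a = xs ! i" by auto
    show "?m \<le> a"
    proof (rule ccontr)
      assume "\<not> ?m \<le> a"
      have "filter (\<lambda>x. ?m \<le> x) (drop i xs) = []"
        using sorted_drop_le[OF s i2(2)] ai \<open>\<not> ?m \<le> a\<close> by (fastforce simp: filter_empty_conv)
      then have "length (filter (\<lambda>x. ?m \<le> x) xs) = length (filter (\<lambda>x. ?m \<le> x) (take i xs))"
        by (metis append_Nil2 append_take_drop_id filter_append)
      also have "\<dots> \<le> i" using length_filter_le[of _ "take i xs"] by (simp add: i2(2) order.strict_implies_order)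
      finally show False using Pm i2(1) unfolding P_def by simp
    qed
  qed
  show "\<forall>b\<in>set (drop ?m xs). b \<le> ?m"
  proof
    fix b assume b: "b \<in> set (drop ?m xs)"
    then obtain i' where i': "i' < length (drop ?m xs)" "b = drop ?m xs ! i'" by (auto simp: in_set_conv_nth)
    define i where "i = ?m + i'"
    have i2: "?m \<le> i" "i < length xs" and bi: "b = xs ! i" using i' unfolding i_def by auto
    show "b \<le> ?m"
    proof (rule ccontr)
      assume "\<not> b \<le> ?m"
      have all: "\<forall>x\<in>set (take (Suc i) xs). Suc ?m \<le> x"
        using sorted_take_ge[OF s i2(2)] bi \<open>\<not> b \<le> ?m\<close> by fastforce
      then have "filter (\<lambda>x. Suc ?m \<le> x) (take (Suc i) xs) = take (Suc i) xs" by (simp add: filter_id_conv)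
      then have "Suc i \<le> length (filter (\<lambda>x. Suc ?m \<le> x) (take (Suc i) xs))" using i2 by simp
      also have "\<dots> \<le> length (filter (\<lambda>x. Suc ?m \<le> x) xs)"
        by (metis append_take_drop_id filter_append length_append le_add1)
      finally have "P (Suc ?m)" unfolding P_def using i2 by simp
      then show False using gm by fastforce
    qed
  qed
qed

definition dflag :: "nat list \<Rightarrow> bool" where
  "dflag xs = (0 < durfee xs \<and> xs ! (durfee xs - 1) = durfee xs)"

definition dst :: "nat list \<Rightarrow> nat \<times> bool" where
  "dst xs = (durfee xs, dflag xs)"

definition step_d :: "nat \<Rightarrow> nat list \<Rightarrow> nat list" where
  "step_d k xs = (let m = durfee xs; A = take m xs; B = drop m xs; j = length (filter (\<lambda>x. x = m) B) in
     if 0 < k \<and> \<not> dflag xs then A @ [Suc m] @ map Suc B @ replicate (k - 1) 1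
     else map (\<lambda>a. a + Suc j) A @ map Suc (filter (\<lambda>x. x \<noteq> m) B) @ replicate (j + k) 1)"

definition dec_d :: "nat list \<Rightarrow> nat \<times> nat list" where
  "dec_d zs = (let M = durfee zs; B' = drop M zs; t = length (filter (\<lambda>x. x = 1) B');
      R = map (\<lambda>x. x - 1) (filter (\<lambda>x. 1 < x) B') in
    if dflag zs then (Suc t, take (M - 1) zs @ R)
    else if M = 0 then (0, [])
    else (let j = min t (zs ! (M - 1) - M - 1) in (t - j, map (\<lambda>a. a - Suc j) (take M zs) @ replicate j M @ R)))"

lemma rep_split:
  assumes "sorted_wrt (\<ge>) B" "\<forall>b\<in>set B. b \<le> (m::nat)"
  shows "B = replicate (length (filter (\<lambda>x. x = m) B)) m @ filter (\<lambda>x. x \<noteq> m) B"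
  using assms
proof (induction B)
  case Nil then show ?case by simp
next
  case (Cons b B)
  show ?case
  proof (cases "b = m")
    case True
    have "B = replicate (length (filter (\<lambda>x. x = m) B)) m @ filter (\<lambda>x. x \<noteq> m) B"
      using Cons by auto
    then show ?thesis using True by simp
  next
    case False
    then have "b < m" using Cons.prems by auto
    then have "\<forall>x\<in>set B. x < m" using Cons.prems by fastforce
    then have "filter (\<lambda>x. x = m) B = []" "filter (\<lambda>x. x \<noteq> m) B = B"
      by (auto simp: filter_empty_conv filter_id_conv)
    then show ?thesis using False by simp
  qed
qed

lemma sum_list_map_add: "sum_list (map (\<lambda>a. a + c) A) = sum_list A + length A * (c::nat)"
  by (induction A) auto

lemma part_facts:
  assumes "xs \<in> partitions n"
  shows "sorted_wrt (\<ge>) xs" "\<forall>x\<in>set xs. 0 < x" "sum_list xs = n"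
  using assms by (auto simp: partitions_def)

lemma step_b:
  assumes xs: "xs \<in> partitions n" and k: "0 < k" and nf: "\<not> dflag xs"
  shows "durfee (step_d k xs) = Suc (durfee xs)" "dflag (step_d k xs)"
    "step_d k xs \<in> partitions (n + length xs + k)" "length (step_d k xs) = length xs + k"
    "dec_d (step_d k xs) = (k, xs)"
proof -
  define m where "m = durfee xs"
  define A where "A = take m xs"
  define B where "B = drop m xs"
  note pf = part_facts[OF xs]
  have mle: "m \<le> length xs" and hA: "\<forall>a\<in>set A. m \<le> a" and hB: "\<forall>b\<in>set B. b \<le> m"
    using durfee_props[OF pf(1)] unfolding m_def A_def B_def by auto
  have lenA: "length A = m" using mle unfolding A_def by simp
  have xsAB: "xs = A @ B" unfolding A_def B_def by simp
  have sA: "sorted_wrt (\<ge>) A" unfolding A_def by (rule sorted_wrt_take[OF pf(1)])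
  have sB: "sorted_wrt (\<ge>) B" unfolding B_def by (rule sorted_wrt_drop[OF pf(1)])
  have pB: "\<forall>b\<in>set B. 0 < b" using pf(2) unfolding B_def by (auto dest: in_set_dropD)
  have hA': "\<forall>a\<in>set A. Suc m \<le> a"
  proof
    fix a assume a: "a \<in> set A"
    then have "0 < m" using lenA by (cases A) auto
    have il: "m - 1 < length xs" using \<open>0 < m\<close> mle by simp
    have "xs ! (m - 1) \<le> a" using sorted_take_ge[OF pf(1) il] a \<open>0 < m\<close> unfolding A_def by simp
    moreover have "A ! (m - 1) = xs ! (m - 1)" unfolding A_def using \<open>0 < m\<close> by simp
    then have "xs ! (m - 1) \<in> set A" using nth_mem[of "m - 1" A] lenA \<open>0 < m\<close> by simp
    then have "m \<le> xs ! (m - 1)" using hA by blast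
    moreover have "xs ! (m - 1) \<noteq> m" using nf \<open>0 < m\<close> unfolding dflag_def m_def by simp
    ultimately show "Suc m \<le> a" by simp
  qed
  have zs: "step_d k xs = (A @ [Suc m]) @ (map Suc B @ replicate (k - 1) 1)"
    using k nf unfolding step_d_def m_def[symmetric] A_def[symmetric] B_def[symmetric] Let_def by simp
  have c1: "\<forall>a\<in>set (A @ [Suc m]). length (A @ [Suc m]) \<le> a" using hA' lenA by auto
  have c2: "\<forall>b\<in>set (map Suc B @ replicate (k - 1) 1). b \<le> length (A @ [Suc m])" using hB lenA by auto
  have d: "durfee (step_d k xs) = Suc m"
    unfolding zs using durfee_eq[OF c1 c2] lenA by simp
  show "durfee (step_d k xs) = Suc (durfee xs)" using d m_def by simp
  have "step_d k xs ! m = Suc m" unfolding zs using lenA by (simp add: nth_append)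
  then show df: "dflag (step_d k xs)" unfolding dflag_def d by simp
  have "sorted_wrt (\<ge>) (map Suc B)" by (rule sorted_map_mono[OF sB]) simp
  moreover have cr: "\<forall>a\<in>set A. \<forall>b\<in>set B. Suc b \<le> a" using hA' hB by (meson Suc_le_mono order_trans)
  ultimately have "sorted_wrt (\<ge>) (step_d k xs)" unfolding zs using sA hA' hB pB
    by (auto simp: sorted_wrt_append sorted_rep)
  moreover have "\<forall>x\<in>set (step_d k xs). 0 < x" unfolding zs using hA' by auto
  moreover have "sum_list (step_d k xs) = n + length xs + k"
    unfolding zs using pf(3) xsAB lenA k by (simp add: sum_map_Suc sum_list_replicate)
  ultimately show "step_d k xs \<in> partitions (n + length xs + k)" by (simp add: partitions_def)
  show "length (step_d k xs) = length xs + k" unfolding zs using xsAB lenA k by simp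
  have dr: "drop (Suc m) (step_d k xs) = map Suc B @ replicate (k - 1) 1" unfolding zs using lenA by simp
  have tk: "take m (step_d k xs) = A" unfolding zs using lenA by simp
  have f1: "filter (\<lambda>x. x = 1) (map Suc B @ replicate (k - 1) 1) = replicate (k - 1) 1"
    using pB by (auto simp: filter_empty_conv)
  have f2: "filter (\<lambda>x. 1 < x) (map Suc B @ replicate (k - 1) 1) = map Suc B"
    using pB by (auto simp: filter_empty_conv filter_id_conv)
  show "dec_d (step_d k xs) = (k, xs)"
    unfolding dec_d_def Let_def d using df dr tk f1 f2 k xsAB by (simp add: map_idI)
qed

lemma step_ac:
  assumes xs: "xs \<in> partitions n" and c: "\<not> (0 < k \<and> \<not> dflag xs)"
  shows "durfee (step_d k xs) = durfee xs" "\<not> dflag (step_d k xs)"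
    "step_d k xs \<in> partitions (n + length xs + k)" "length (step_d k xs) = length xs + k"
    "dec_d (step_d k xs) = (k, xs)"
proof -
  define m where "m = durfee xs"
  define A where "A = take m xs"
  define B where "B = drop m xs"
  define j where "j = length (filter (\<lambda>x. x = m) B)"
  define \<gamma> where "\<gamma> = filter (\<lambda>x. x \<noteq> m) B"
  note pf = part_facts[OF xs]
  have mle: "m \<le> length xs" and hA: "\<forall>a\<in>set A. m \<le> a" and hB: "\<forall>b\<in>set B. b \<le> m"
    using durfee_props[OF pf(1)] unfolding m_def A_def B_def by auto
  have lenA: "length A = m" using mle unfolding A_def by simp
  have xsAB: "xs = A @ B" unfolding A_def B_def by simp
  have sA: "sorted_wrt (\<ge>) A" unfolding A_def by (rule sorted_wrt_take[OF pf(1)])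
  have sB: "sorted_wrt (\<ge>) B" unfolding B_def by (rule sorted_wrt_drop[OF pf(1)])
  have pB: "\<forall>b\<in>set B. 0 < b" using pf(2) unfolding B_def by (auto dest: in_set_dropD)
  have Bsplit: "B = replicate j m @ \<gamma>" unfolding j_def \<gamma>_def by (rule rep_split[OF sB hB])
  have hg: "\<forall>g\<in>set \<gamma>. g < m" using hB unfolding \<gamma>_def by fastforce
  have pg: "\<forall>g\<in>set \<gamma>. 0 < g" using pB unfolding \<gamma>_def by auto
  have sg: "sorted_wrt (\<ge>) \<gamma>" unfolding \<gamma>_def by (rule sorted_wrt_filter[OF sB])
  have zs: "step_d k xs = map (\<lambda>a. a + Suc j) A @ (map Suc \<gamma> @ replicate (j + k) 1)"
    using c unfolding step_d_def m_def[symmetric] A_def[symmetric] B_def[symmetric]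
      j_def[symmetric] \<gamma>_def[symmetric] Let_def if_not_P[OF c] by simp
  show "durfee (step_d k xs) = durfee xs"
    "\<not> dflag (step_d k xs)"
    "step_d k xs \<in> partitions (n + length xs + k)" "length (step_d k xs) = length xs + k"
    "dec_d (step_d k xs) = (k, xs)"
  proof -
    consider "m = 0" | "0 < m" by auto
    then have "durfee (step_d k xs) = durfee xs \<and> \<not> dflag (step_d k xs) \<and>
      step_d k xs \<in> partitions (n + length xs + k) \<and> length (step_d k xs) = length xs + k \<and>
      dec_d (step_d k xs) = (k, xs)"
    proof cases
      case 1
      have "B = []" using hB pB 1 by (cases B) auto
      moreover have "A = []" using lenA 1 by simp
      ultimately have x0: "xs = []" using xsAB by simp
      then have "\<not> dflag xs" unfolding dflag_def by (simp add: durfee_nil)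
      then have k0: "k = 0" using c by simp
      have j0: "j = 0" "\<gamma> = []" unfolding j_def \<gamma>_def using \<open>B = []\<close> by auto
      have s0: "step_d k xs = []" unfolding zs using \<open>A = []\<close> j0 k0 by simp
      have "dflag [] = False" unfolding dflag_def by (simp add: durfee_nil)
      moreover have "dec_d [] = (0, [])" unfolding dec_d_def by (simp add: durfee_nil dflag_def)
      moreover have "n = 0" using pf(3) x0 by simp
      ultimately show ?thesis using s0 x0 k0 by (simp add: durfee_nil partitions_def)
    next
      case 2
      have c1: "\<forall>a\<in>set (map (\<lambda>a. a + Suc j) A). length (map (\<lambda>a. a + Suc j) A) \<le> a"
        using hA lenA by auto
      have c2: "\<forall>b\<in>set (map Suc \<gamma> @ replicate (j + k) 1). b \<le> length (map (\<lambda>a. a + Suc j) A)"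
        using hg lenA 2 by (auto simp: Suc_le_eq)
      have d: "durfee (step_d k xs) = m" unfolding zs using durfee_eq[OF c1 c2] lenA by simp
      have il: "m - 1 < length A" using lenA 2 by simp
      have Am: "m \<le> A ! (m - 1)" using hA nth_mem[OF il] by blast
      have xAm: "xs ! (m - 1) = A ! (m - 1)" unfolding A_def using 2 by simp
      have zn: "step_d k xs ! (m - 1) = A ! (m - 1) + Suc j" unfolding zs using il lenA
        by (simp add: nth_append)
      have nd: "\<not> dflag (step_d k xs)" unfolding dflag_def d zn using Am by simp
      have "sorted_wrt (\<ge>) (map (\<lambda>a. a + Suc j) A)" by (rule sorted_map_mono[OF sA]) simp
      moreover have "sorted_wrt (\<ge>) (map Suc \<gamma>)" by (rule sorted_map_mono[OF sg]) simp
      moreover have cr: "\<forall>a\<in>set A. \<forall>g\<in>set \<gamma>. Suc g \<le> a + Suc j" using hA hg by fastforce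
      moreover have "\<forall>a\<in>set A. 1 \<le> a + Suc j" by simp
      ultimately have "sorted_wrt (\<ge>) (step_d k xs)" unfolding zs
        by (auto simp: sorted_wrt_append sorted_rep)
      moreover have "\<forall>x\<in>set (step_d k xs). 0 < x" unfolding zs by auto
      moreover have "sum_list (step_d k xs) = n + length xs + k"
      proof -
        have "sum_list (step_d k xs) = sum_list A + m * Suc j + (sum_list \<gamma> + length \<gamma>) + (j + k)"
        proof -
          have s1: "sum_list (map (\<lambda>a. a + Suc j) A) = sum_list A + m * Suc j"
            by (simp only: sum_list_map_add lenA)
          show ?thesis unfolding zs sum_list_append s1 by (simp add: sum_map_Suc sum_list_replicate)
        qed
        moreover have "n = sum_list A + j * m + sum_list \<gamma>" using pf(3) xsAB Bsplit
          by (simp add: sum_list_replicate)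
        moreover have "length xs = m + j + length \<gamma>" using xsAB Bsplit lenA by simp
        ultimately show ?thesis by (simp add: algebra_simps)
      qed
      ultimately have pa: "step_d k xs \<in> partitions (n + length xs + k)" by (simp add: partitions_def)
      have le: "length (step_d k xs) = length xs + k" unfolding zs using xsAB Bsplit lenA by simp
      have dr: "drop m (step_d k xs) = map Suc \<gamma> @ replicate (j + k) 1" unfolding zs using lenA by simp
      have tk: "take m (step_d k xs) = map (\<lambda>a. a + Suc j) A" unfolding zs using lenA by simp
      have f1: "filter (\<lambda>x. x = 1) (map Suc \<gamma> @ replicate (j + k) 1) = replicate (j + k) 1"
        using pg by (auto simp: filter_empty_conv)
      have f2: "filter (\<lambda>x. 1 < x) (map Suc \<gamma> @ replicate (j + k) 1) = map Suc \<gamma>"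
        using pg by (auto simp: filter_empty_conv filter_id_conv)
      have mj: "min (j + k) (A ! (m - 1) + Suc j - m - 1) = j"
      proof (cases "k = 0")
        case True then show ?thesis using Am by simp
      next
        case False
        then have "dflag xs" using c by simp
        then have "A ! (m - 1) = m" using xAm unfolding dflag_def m_def by simp
        then show ?thesis by simp
      qed
      have "dec_d (step_d k xs) = (k, map (\<lambda>a. a - Suc j) (map (\<lambda>a. a + Suc j) A) @ replicate j m @ \<gamma>)"
        unfolding dec_d_def Let_def d dr tk f1 f2 using nd 2 zn mj by (simp add: map_idI)
      also have "\<dots> = (k, xs)" using xsAB Bsplit by (simp add: map_idI)
      finally show ?thesis using d nd pa le m_def by simp
    qed
    then show "durfee (step_d k xs) = durfee xs"
      "\<not> dflag (step_d k xs)"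
      "step_d k xs \<in> partitions (n + length xs + k)" "length (step_d k xs) = length xs + k"
      "dec_d (step_d k xs) = (k, xs)" by auto
  qed
qed

lemma D_surj:
  assumes zsp: "zs \<in> partitions n" and ne: "zs \<noteq> []"
  shows "\<exists>k ys n'. ys \<in> partitions n' \<and> step_d k ys = zs"
proof -
  define M where "M = durfee zs"
  define A' where "A' = take M zs"
  define B' where "B' = drop M zs"
  define t where "t = length (filter (\<lambda>x. x = 1) B')"
  define R where "R = map (\<lambda>x. x - 1) (filter (\<lambda>x. 1 < x) B')"
  note pf = part_facts[OF zsp]
  have Mle: "M \<le> length zs" and hA: "\<forall>a\<in>set A'. M \<le> a" and hB: "\<forall>b\<in>set B'. b \<le> M"
    using durfee_props[OF pf(1)] unfolding M_def A'_def B'_def by auto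
  have lenA: "length A' = M" using Mle unfolding A'_def by simp
  have zsAB: "zs = A' @ B'" unfolding A'_def B'_def by simp
  have sA: "sorted_wrt (\<ge>) A'" unfolding A'_def by (rule sorted_wrt_take[OF pf(1)])
  have sB: "sorted_wrt (\<ge>) B'" unfolding B'_def by (rule sorted_wrt_drop[OF pf(1)])
  have pB: "\<forall>b\<in>set B'. 0 < b" using pf(2) unfolding B'_def by (auto dest: in_set_dropD)
  have pA: "\<forall>b\<in>set A'. 0 < b" using pf(2) unfolding A'_def by (auto dest: in_set_takeD)
  have Bs: "B' = filter (\<lambda>x. 1 < x) B' @ replicate t 1"
    unfolding t_def using sorted_split1[OF sB pB] filter_eq_rep[of 1 B'] by metis
  have mR: "map Suc R = filter (\<lambda>x. 1 < x) B'" unfolding R_def by (auto intro: map_idI)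
  have hR: "\<forall>r\<in>set R. 0 < r \<and> r < M"
  proof
    fix r assume "r \<in> set R"
    then obtain x where x: "x \<in> set B'" "1 < x" "r = x - 1" unfolding R_def by auto
    then have "x \<le> M" using hB by blast
    then show "0 < r \<and> r < M" using x by simp
  qed
  have sR: "sorted_wrt (\<ge>) R" unfolding R_def
    by (auto intro!: sorted_map_mono sorted_wrt_filter sB)
  have M0: "0 < M"
  proof (rule ccontr)
    assume "\<not> 0 < M"
    then have "\<forall>b\<in>set zs. b \<le> 0" using hB unfolding B'_def by simp
    then show False using pf(2) ne by (cases zs) auto
  qed
  have il: "M - 1 < length A'" using lenA M0 by simp
  have cA: "zs ! (M - 1) = A' ! (M - 1)" unfolding A'_def using M0 by simp
  have cge: "M \<le> zs ! (M - 1)" using cA hA nth_mem[OF il] by auto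
  have cle: "zs ! (M - 1) \<le> a" if "a \<in> set A'" for a
  proof -
    have "Suc (M - 1) = M" using M0 by simp
    then have "a \<in> set (take (Suc (M - 1)) zs)" using that unfolding A'_def by simp
    moreover have "M - 1 < length zs" using M0 Mle by simp
    ultimately show ?thesis using sorted_take_ge[OF pf(1)] by blast
  qed
  show ?thesis
  proof (cases "dflag zs")
    case True
    define m where "m = M - 1"
    define ys where "ys = take m zs @ R"
    have cM: "zs ! (M - 1) = M" using True unfolding dflag_def M_def by simp
    have tm: "set (take m zs) \<subseteq> set A'" unfolding A'_def m_def by (simp add: set_take_subset_set_take)
    have lt: "length (take m zs) = m" using Mle unfolding m_def by simp
    have htm: "\<forall>a\<in>set (take m zs). M \<le> a" using tm hA by blast
    have dys: "durfee ys = m" unfolding ys_def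
    proof -
      have "durfee (take m zs @ R) = length (take m zs)"
      proof (rule durfee_eq)
        show "\<forall>a\<in>set (take m zs). length (take m zs) \<le> a"
        proof
          fix a assume "a \<in> set (take m zs)"
          then have "M \<le> a" using htm by blast
          then show "length (take m zs) \<le> a" using lt m_def by simp
        qed
        show "\<forall>b\<in>set R. b \<le> length (take m zs)"
        proof
          fix b assume "b \<in> set R"
          then have "b < M" using hR by blast
          then show "b \<le> length (take m zs)" using lt m_def by simp
        qed
      qed
      then show "durfee (take m zs @ R) = m" using lt by simp
    qed
    have ndys: "\<not> dflag ys"
    proof
      assume "dflag ys"
      then have m0: "0 < m" and e: "ys ! (m - 1) = m" unfolding dflag_def dys by auto
      have "ys ! (m - 1) = take m zs ! (m - 1)" unfolding ys_def using lt m0 by (simp add: nth_append)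
      moreover have "take m zs ! (m - 1) \<in> set (take m zs)" using lt m0 by (intro nth_mem) simp
      ultimately have "M \<le> ys ! (m - 1)" using htm by simp
      then show False using e m_def M0 by simp
    qed
    have st: "step_d (Suc t) ys = take m ys @ [Suc m] @ map Suc (drop m ys) @ replicate t 1"
      unfolding step_d_def Let_def dys using ndys by simp
    have "take m ys = take m zs" "drop m ys = R" unfolding ys_def using lt by auto
    moreover have "Suc m = zs ! (M - 1)" using cM m_def M0 by simp
    moreover have e0: "map Suc R @ replicate t 1 = B'" using mR Bs by simp
    ultimately have "step_d (Suc t) ys = take (M - 1) zs @ [zs ! (M - 1)] @ B'"
      using st m_def by simp
    also have "\<dots> = zs" unfolding B'_def using id_take_nth_drop[of "M - 1" zs] M0 Mle by simp
    finally have e: "step_d (Suc t) ys = zs" .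
    have cr: "\<forall>a\<in>set (take m zs). \<forall>r\<in>set R. r \<le> a"
    proof (intro ballI)
      fix a r assume "a \<in> set (take m zs)" "r \<in> set R"
      then have "M \<le> a" "r < M" using htm hR by auto
      then show "r \<le> a" by simp
    qed
    have "sorted_wrt (\<ge>) ys" unfolding ys_def using sorted_wrt_take[OF pf(1)] sR cr
      by (simp add: sorted_wrt_append)
    moreover have "\<forall>y\<in>set ys. 0 < y" unfolding ys_def using hR pf(2) by (auto dest: in_set_takeD)
    ultimately have "ys \<in> partitions (sum_list ys)" by (simp add: partitions_def)
    then show ?thesis using e by blast
  next
    case False
    define c where "c = zs ! (M - 1)"
    have cM: "M + 1 \<le> c" using cge False M0 unfolding c_def dflag_def M_def by auto
    define j where "j = min t (c - M - 1)"
    define k where "k = t - j"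
    define A where "A = map (\<lambda>a. a - Suc j) A'"
    define ys where "ys = A @ replicate j M @ R"
    have jc: "j \<le> c - M - 1" "j \<le> t" unfolding j_def by auto
    have ha: "M + Suc j \<le> a" if "a \<in> set A'" for a using cle[OF that] jc cM unfolding c_def by linarith
    have hA2: "\<forall>a\<in>set A. M \<le> a"
    proof
      fix b assume "b \<in> set A"
      then obtain a where "a \<in> set A'" "b = a - Suc j" unfolding A_def by auto
      then show "M \<le> b" using ha by fastforce
    qed
    have lenA2: "length A = M" unfolding A_def using lenA by simp
    have "\<forall>b\<in>set (replicate j M @ R). b \<le> length A" using hR lenA2 by auto
    then have dys: "durfee ys = M" unfolding ys_def
      using durfee_eq[of A "replicate j M @ R"] hA2 lenA2 by simp
    have yM: "ys ! (M - 1) = c - Suc j" unfolding ys_def A_def c_def cA using il lenA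
      by (simp add: nth_append)
    have br: "\<not> (0 < k \<and> \<not> dflag ys)"
    proof
      assume a: "0 < k \<and> \<not> dflag ys"
      then have "j < t" unfolding k_def by simp
      then have "j = c - M - 1" unfolding j_def by simp
      then have "ys ! (M - 1) = M" using yM cM by simp
      then show False using a M0 dys unfolding dflag_def by simp
    qed
    have tM: "take M ys = A" "drop M ys = replicate j M @ R" unfolding ys_def using lenA2 by auto
    have fR1: "filter (\<lambda>x. x = M) R = []" "filter (\<lambda>x. x \<noteq> M) R = R" using hR
      by (auto simp: filter_empty_conv filter_id_conv)
    have "step_d k ys = map (\<lambda>a. a + Suc j) A @ map Suc R @ replicate (j + k) 1"
      unfolding step_d_def Let_def dys tM if_not_P[OF br] using fR1 M0 by simp
    also have "map (\<lambda>a. a + Suc j) A = A'" unfolding A_def map_map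
    proof (rule map_idI)
      fix a assume "a \<in> set A'"
      then have "M + Suc j \<le> a" by (rule ha)
      then show "((\<lambda>a. a + Suc j) \<circ> (\<lambda>a. a - Suc j)) a = a" by simp
    qed
    also have "j + k = t" unfolding k_def using jc by simp
    finally have e: "step_d k ys = zs" using mR Bs zsAB by simp
    have "sorted_wrt (\<ge>) A" unfolding A_def by (rule sorted_map_mono[OF sA]) simp
    moreover have "sorted_wrt (\<ge>) (replicate j M @ R)" using sR hR
      by (auto simp: sorted_wrt_append sorted_rep less_imp_le)
    moreover have "\<forall>a\<in>set A. \<forall>y\<in>set (replicate j M @ R). y \<le> a"
    proof (intro ballI)
      fix a y assume "a \<in> set A" "y \<in> set (replicate j M @ R)"
      then have "M \<le> a" "y \<le> M" using hA2 hR by auto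
      then show "y \<le> a" by simp
    qed
    ultimately have "sorted_wrt (\<ge>) ys" unfolding ys_def
      by (simp only: sorted_wrt_append) blast
    moreover have "\<forall>y\<in>set ys. 0 < y" unfolding ys_def using hR hA2 M0 by auto
    ultimately have "ys \<in> partitions (sum_list ys)" by (simp add: partitions_def)
    then show ?thesis using e by blast
  qed
qed

lemma D_all:
  assumes "ys \<in> partitions n'"
  shows "step_d k ys \<in> partitions (n' + length ys + k) \<and> length (step_d k ys) = length ys + k \<and>
    dst (step_d k ys) = tr k (dst ys) \<and> dec_d (step_d k ys) = (k, ys)"
proof (cases "0 < k \<and> \<not> dflag ys")
  case True
  note r = step_b[OF assms True[THEN conjunct1] True[THEN conjunct2]]
  then show ?thesis using True unfolding dst_def tr_def by simp
next
  case False
  note r = step_ac[OF assms False]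
  then show ?thesis using False unfolding dst_def tr_def by auto
qed

lemma D_part: "ys \<in> partitions n' \<Longrightarrow> step_d k ys \<in> partitions (n' + length ys + k)"
  using D_all by blast
lemma D_len: "ys \<in> partitions n' \<Longrightarrow> length (step_d k ys) = length ys + k"
  using D_all by blast
lemma D_st: "ys \<in> partitions n' \<Longrightarrow> dst (step_d k ys) = tr k (dst ys)"
  using D_all by blast
lemma D_inj: "ys1 \<in> partitions n1 \<Longrightarrow> ys2 \<in> partitions n2 \<Longrightarrow>
              step_d k1 ys1 = step_d k2 ys2 \<Longrightarrow> k1 = k2 \<and> ys1 = ys2"
proof -
  assume a: "ys1 \<in> partitions n1" "ys2 \<in> partitions n2" "step_d k1 ys1 = step_d k2 ys2"
  have "(k1, ys1) = dec_d (step_d k1 ys1)" using D_all[OF a(1)] by simp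
  also have "\<dots> = dec_d (step_d k2 ys2)" using a(3) by simp
  also have "\<dots> = (k2, ys2)" using D_all[OF a(2)] by simp
  finally show ?thesis by simp
qed

lemma part_sum: "xs \<in> partitions n \<Longrightarrow> sum_list xs = n"
  by (simp add: partitions_def)

lemma len_le_sum: "\<forall>x\<in>set xs. 0 < (x::nat) \<Longrightarrow> length xs \<le> sum_list xs"
  by (induction xs) auto

lemma finite_partitions: "finite (partitions n)"
proof -
  have "partitions n \<subseteq> {xs. set xs \<subseteq> {0..n} \<and> length xs \<le> n}"
  proof (rule subsetI)
    fix xs assume a: "xs \<in> partitions n"
    then have "length xs \<le> n" using len_le_sum[of xs] by (auto simp: partitions_def)
    moreover have "set xs \<subseteq> {0..n}"
      using a member_le_sum_list[of _ xs] by (auto simp: partitions_def)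
    ultimately show "xs \<in> {xs. set xs \<subseteq> {0..n} \<and> length xs \<le> n}" by simp
  qed
  moreover have "finite {xs. set xs \<subseteq> {0..n} \<and> length xs \<le> n}"
    using finite_lists_length_le[of "{0..n}" n] by simp
  ultimately show ?thesis by (rule finite_subset)
qed

lemma count_step:
  fixes step :: "nat \<Rightarrow> nat list \<Rightarrow> nat list" and st :: "nat list \<Rightarrow> nat \<times> bool"
  assumes part: "\<And>n' k ys. ys \<in> partitions n' \<Longrightarrow> step k ys \<in> partitions (n' + length ys + k)"
  and len: "\<And>n' k ys. ys \<in> partitions n' \<Longrightarrow> length (step k ys) = length ys + k"
  and stt: "\<And>n' k ys. ys \<in> partitions n' \<Longrightarrow> st (step k ys) = tr k (st ys)"
  and inj: "\<And>n1 n2 k1 k2 ys1 ys2. ys1 \<in> partitions n1 \<Longrightarrow> ys2 \<in> partitions n2 \<Longrightarrow>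
              step k1 ys1 = step k2 ys2 \<Longrightarrow> k1 = k2 \<and> ys1 = ys2"
  and surj: "\<And>n zs. zs \<in> partitions n \<Longrightarrow> zs \<noteq> [] \<Longrightarrow> \<exists>k ys n'. ys \<in> partitions n' \<and> step k ys = zs"
  and l: "1 \<le> l" "l \<le> n"
  shows "card {xs \<in> partitions n. length xs = l \<and> st xs \<in> S}
       = (\<Sum>k\<le>l. card {ys \<in> partitions (n - l). length ys = l - k \<and> st ys \<in> tr k -` S})"
proof -
  define Bk where "Bk k = {ys \<in> partitions (n - l). length ys = l - k \<and> st ys \<in> tr k -` S}" for k
  have fin: "finite (Bk k)" for k unfolding Bk_def using finite_partitions by auto
  have eq: "{xs \<in> partitions n. length xs = l \<and> st xs \<in> S} = (\<lambda>(k, ys). step k ys) ` (SIGMA k:{..l}. Bk k)"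
  proof
    show "(\<lambda>(k, ys). step k ys) ` (SIGMA k:{..l}. Bk k) \<subseteq> {xs \<in> partitions n. length xs = l \<and> st xs \<in> S}"
    proof (rule subsetI)
      fix z assume "z \<in> (\<lambda>(k, ys). step k ys) ` (SIGMA k:{..l}. Bk k)"
      then obtain k ys where "k \<in> {..l}" "ys \<in> Bk k" "z = step k ys" by auto
      then have k: "k \<le> l" and ys: "ys \<in> partitions (n - l)" "length ys = l - k" "tr k (st ys) \<in> S"
        and z: "z = step k ys"
        unfolding Bk_def by auto
      have "n - l + length ys + k = n" using k ys(2) l by simp
      then have "step k ys \<in> partitions n \<and> length (step k ys) = l \<and> st (step k ys) \<in> S"
        using part[OF ys(1), of k] len[OF ys(1), of k] stt[OF ys(1), of k] ys k by simp
      then show "z \<in> {xs \<in> partitions n. length xs = l \<and> st xs \<in> S}" using z by simp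
    qed
  next
    show "{xs \<in> partitions n. length xs = l \<and> st xs \<in> S} \<subseteq> (\<lambda>(k, ys). step k ys) ` (SIGMA k:{..l}. Bk k)"
    proof (rule subsetI)
      fix xs assume "xs \<in> {xs \<in> partitions n. length xs = l \<and> st xs \<in> S}"
      then have xs: "xs \<in> partitions n" "l = length xs" "st xs \<in> S" by auto
      then have "xs \<noteq> []" using l by auto
      then obtain k ys n' where ys: "ys \<in> partitions n'" "step k ys = xs" using surj[OF xs(1)] by blast
      have "xs \<in> partitions (n' + length ys + k)" using part[OF ys(1), of k] ys(2) by simp
      then have "n' + length ys + k = n" using xs(1) part_sum by metis
      moreover have "length ys + k = l" using len[OF ys(1), of k] ys(2) xs(2) by simp
      ultimately have "k \<le> l" "n' = n - l" "length ys = l - k" by auto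
      moreover have "tr k (st ys) \<in> S" using stt[OF ys(1), of k] ys(2) xs(3) by simp
      ultimately have "(k, ys) \<in> (SIGMA k:{..l}. Bk k)" unfolding Bk_def using ys(1) by auto
      then show "xs \<in> (\<lambda>(k, ys). step k ys) ` (SIGMA k:{..l}. Bk k)" using ys(2) by force
    qed
  qed
  have "inj_on (\<lambda>(k, ys). step k ys) (SIGMA k:{..l}. Bk k)"
  proof (rule inj_onI)
    fix p q assume p: "p \<in> (SIGMA k:{..l}. Bk k)" and q: "q \<in> (SIGMA k:{..l}. Bk k)"
      and e: "(\<lambda>(k, ys). step k ys) p = (\<lambda>(k, ys). step k ys) q"
    obtain k1 ys1 where p1: "p = (k1, ys1)" by (cases p)
    obtain k2 ys2 where q1: "q = (k2, ys2)" by (cases q)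
    have "ys1 \<in> partitions (n - l)" "ys2 \<in> partitions (n - l)" using p q p1 q1 unfolding Bk_def by auto
    moreover have "step k1 ys1 = step k2 ys2" using e p1 q1 by simp
    ultimately have "k1 = k2 \<and> ys1 = ys2" by (rule inj)
    then show "p = q" using p1 q1 by simp
  qed
  then have ci: "card ((\<lambda>(k, ys). step k ys) ` (SIGMA k:{..l}. Bk k)) = card (SIGMA k:{..l}. Bk k)"
    by (rule card_image)
  have "card {xs \<in> partitions n. length xs = l \<and> st xs \<in> S} = card (SIGMA k:{..l}. Bk k)"
    unfolding eq by (rule ci)
  also have "\<dots> = (\<Sum>k\<le>l. card (Bk k))" using fin by (simp add: card_SigmaI)
  finally show ?thesis unfolding Bk_def .
qed

lemma S_inj: "ys1 \<in> partitions n1 \<Longrightarrow> ys2 \<in> partitions n2 \<Longrightarrow>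
              col k1 ys1 = col k2 ys2 \<Longrightarrow> k1 = k2 \<and> ys1 = ys2"
proof -
  assume a: "ys1 \<in> partitions n1" "ys2 \<in> partitions n2" "col k1 ys1 = col k2 ys2"
  have p1: "\<forall>y\<in>set ys1. 0 < y" using a(1) by (simp add: partitions_def)
  have p2: "\<forall>y\<in>set ys2. 0 < y" using a(2) by (simp add: partitions_def)
  have "(k1, ys1) = dec_s (col k1 ys1)" using dec_col[OF p1] by simp
  also have "\<dots> = dec_s (col k2 ys2)" using a(3) by simp
  also have "\<dots> = (k2, ys2)" using dec_col[OF p2] by simp
  finally show ?thesis by simp
qed

lemma col_len': "ys \<in> partitions n' \<Longrightarrow> length (col k ys) = length ys + k"
  by (simp add: col_len)
lemma sst_col': "ys \<in> partitions n' \<Longrightarrow> sst (col k ys) = tr k (sst ys)"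
  by (rule sst_col) (simp add: partitions_def)
lemma col_surj': "zs \<in> partitions n \<Longrightarrow> zs \<noteq> [] \<Longrightarrow> \<exists>k ys n'. ys \<in> partitions n' \<and> col k ys = zs"
  by (rule col_surj)

lemma main_count:
  "card {xs \<in> partitions n. length xs = l \<and> sst xs \<in> S} = card {xs \<in> partitions n. length xs = l \<and> dst xs \<in> S}"
proof (induction n arbitrary: l S rule: less_induct)
  case (less n)
  show ?case
  proof (cases "n = 0")
    case True
    have p0: "partitions 0 = {[]}"
    proof -
      have "xs = []" if "xs \<in> partitions 0" for xs
      proof (cases xs)
        case (Cons x xs')
        then have "0 < x" "x \<le> sum_list xs" using that by (auto simp: partitions_def)
        moreover have "sum_list xs = 0" using that by (simp add: partitions_def)
        ultimately show ?thesis by simp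
      qed
      moreover have "[] \<in> partitions 0" by (simp add: partitions_def)
      ultimately show ?thesis by blast
    qed
    have "sst [] = dst []" by (simp add: sst_def dst_def dflag_def durfee_nil)
    have e: "xs = []" if "xs \<in> partitions n" for xs using True p0 that by simp
    have "{xs \<in> partitions n. length xs = l \<and> sst xs \<in> S} = {xs \<in> partitions n. length xs = l \<and> dst xs \<in> S}"
    proof (rule Collect_cong)
      fix xs show "(xs \<in> partitions n \<and> length xs = l \<and> sst xs \<in> S) = (xs \<in> partitions n \<and> length xs = l \<and> dst xs \<in> S)"
        using e[of xs] \<open>sst [] = dst []\<close> by auto
    qed
    then show ?thesis by simp
  next
    case False
    show ?thesis
    proof (cases "1 \<le> l \<and> l \<le> n")
      case True
      have "card {xs \<in> partitions n. length xs = l \<and> sst xs \<in> S}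
         = (\<Sum>k\<le>l. card {ys \<in> partitions (n - l). length ys = l - k \<and> sst ys \<in> tr k -` S})"
        by (rule count_step[where step = col, OF col_part col_len' sst_col' S_inj col_surj'])
          (use True in auto)
      also have "\<dots> = (\<Sum>k\<le>l. card {ys \<in> partitions (n - l). length ys = l - k \<and> dst ys \<in> tr k -` S})"
      proof (rule sum.cong[OF refl])
        fix k show "card {ys \<in> partitions (n - l). length ys = l - k \<and> sst ys \<in> tr k -` S}
          = card {ys \<in> partitions (n - l). length ys = l - k \<and> dst ys \<in> tr k -` S}"
          by (rule less.IH) (use True False in simp)
      qed
      also have "\<dots> = card {xs \<in> partitions n. length xs = l \<and> dst xs \<in> S}"
        by (rule count_step[where step = step_d, OF D_part D_len D_st D_inj D_surj, symmetric])
          (use True in auto)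
      finally show ?thesis .
    next
      case False
      have "{xs \<in> partitions n. length xs = l} = {}"
      proof -
        { fix xs assume "xs \<in> partitions n" "length xs = l"
          then have "length xs \<le> n" "sum_list xs = n" using len_le_sum[of xs] by (auto simp: partitions_def)
          then have False using False \<open>n \<noteq> 0\<close> \<open>length xs = l\<close> by (cases xs) simp_all }
        then show ?thesis by blast
      qed
      then have e1: "{xs \<in> partitions n. length xs = l \<and> sst xs \<in> S} = {}"
        and e2: "{xs \<in> partitions n. length xs = l \<and> dst xs \<in> S} = {}" by auto
      show ?thesis unfolding e1 e2 ..
    qed
  qed
qed

theorem corollary1p5:
  fixes n l m :: nat
  shows "card {xs \<in> partitions n. length xs = l \<and> k_measure 2 xs = m}
       = card {xs \<in> partitions n. length xs = l \<and> durfee xs = m}"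
proof -
  have "{xs \<in> partitions n. length xs = l \<and> k_measure 2 xs = m}
      = {xs \<in> partitions n. length xs = l \<and> sst xs \<in> {s. fst s = m}}"
    by (auto simp: sst_def kmeasure_greedy partitions_def)
  moreover have "{xs \<in> partitions n. length xs = l \<and> durfee xs = m}
      = {xs \<in> partitions n. length xs = l \<and> dst xs \<in> {s. fst s = m}}"
    by (auto simp: dst_def)
  ultimately show ?thesis using main_count[of n l "{s. fst s = m}"] by simp
qed

end
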